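(* Let $0<\varepsilon\le1$ and let $\vec U\in V_{\mathrm{per}}(\Omega^\varepsilon)$ and $P\in L^2(\Omega^\varepsilon)$ satisfy, for constants $C_1,C_2$ independent of $\varepsilon$, (i) $\|\operatorname{div}\vec U\|_{L^2(\Omega^\varepsilon)}\le C_1\varepsilon^{5/2}$, and (ii) for all $\vec\varphi\in V_{\mathrm{per}}(\Omega^\varepsilon)$: $$\Big|\int_{\Omega^\varepsilon}\nabla\vec U:\nabla\vec\varphi-\int_{\Omega^\varepsilon}P\,\operatorname{div}\vec\varphi\Big|\le C_2\varepsilon^{3/2}\big(\|\nabla\vec\varphi\|_{L^2(\Omega^\varepsilon)^4}+\|\vec\varphi\|_{H^1(\Omega_{\mathrm{ff}})^2}\big).$$ Then there is a constant $C$ (depending only on $C_1,C_2$) such that $$\|\nabla\vec U\|^2_{L^2(\Omega^\varepsilon)^4}\le C\varepsilon^{5/2}\|P\|_{L^2(\Omega^\varepsilon)}+C\varepsilon^{3/2}\big(\|\nabla\vec U\|_{L^2(\Omega^\varepsilon_{\mathrm{pm}})^4}+\|\vec U\|_{H^1(\Omega_{\mathrm{ff}})^2}\big).$$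
   Context: Two-dimensional setting with scale parameter $\varepsilon=\ell/L$. The pore-scale flow domain is $\Omega^\varepsilon=\Omega_{\mathrm{ff}}\cup\Sigma\cup\Omega^\varepsilon_{\mathrm{pm}}$, where $\Omega_{\mathrm{ff}}=(0,L)\times(0,h)$ is the free-flow region, $\Sigma=(0,L)\times\{0\}$ the interface, and $\Omega^\varepsilon_{\mathrm{pm}}$ is the fluid part of the porous region $(0,L)\times(-H,0)$, obtained by periodic repetition of $\varepsilon$-scaled unit cells $\varepsilon Y$ containing a solid inclusion $\varepsilon Y_s$ strictly inside each cell. The test space is $V_{\mathrm{per}}(\Omega^\varepsilon)=\{\vec\phi\in H^1(\Omega^\varepsilon)^2:\ \vec\phi=\vec0$ on the boundaries of the solid inclusions, $\vec\phi=\vec 0$ on $\{x_2=h\}$, $\phi_2=0$ on $\{x_2=-H\}$, $\vec\phi$ is $L$-periodic in $x_1\}$. In the paper, $(\vec U,P)$ is the pair $(\vec U^{6,\varepsilon},P^{6,\varepsilon})$ of velocity and pressure errors between the pore-scale Stokes solution and the constructed multiscale approximation, for which (i) and (ii) are the conclusions of Corollaries 3.3 and 3.4. *)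

theory Defs
  imports "HOL-Analysis.Analysis"
begin

type_synonym pt = "real \<times> real"

definition evec :: "nat \<Rightarrow> pt" where
  "evec j = (if j = 1 then (1, 0) else (0, 1))"

definition pd :: "nat \<Rightarrow> (pt \<Rightarrow> real) \<Rightarrow> pt \<Rightarrow> real" where
  "pd j f x = frechet_derivative f (at x) (evec j)"

fun iter_pd :: "nat list \<Rightarrow> (pt \<Rightarrow> real) \<Rightarrow> pt \<Rightarrow> real" where
  "iter_pd [] f = f"
| "iter_pd (j # js) f = pd j (iter_pd js f)"

definition smooth :: "(pt \<Rightarrow> real) \<Rightarrow> bool" where
  "smooth f \<longleftrightarrow> (\<forall>js x. iter_pd js f differentiable (at x))"

definition test_fun :: "pt set \<Rightarrow> (pt \<Rightarrow> real) \<Rightarrow> bool" where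
  "test_fun \<Omega> \<psi> \<longleftrightarrow> smooth \<psi> \<and> compact (closure {x. \<psi> x \<noteq> 0})
      \<and> closure {x. \<psi> x \<noteq> 0} \<subseteq> \<Omega>"

definition comp :: "nat \<Rightarrow> (pt \<Rightarrow> pt) \<Rightarrow> pt \<Rightarrow> real" where
  "comp i U x = (if i = 1 then fst (U x) else snd (U x))"

definition weak_partial :: "pt set \<Rightarrow> (pt \<Rightarrow> real) \<Rightarrow> nat \<Rightarrow> (pt \<Rightarrow> real) \<Rightarrow> bool" where
  "weak_partial \<Omega> f j g \<longleftrightarrow>
     (\<forall>\<psi>. test_fun \<Omega> \<psi> \<longrightarrow>
        integrable (lebesgue_on \<Omega>) (\<lambda>x. f x * pd j \<psi> x)
      \<and> integrable (lebesgue_on \<Omega>) (\<lambda>x. g x * \<psi> x)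
      \<and> integral\<^sup>L (lebesgue_on \<Omega>) (\<lambda>x. f x * pd j \<psi> x)
          = - integral\<^sup>L (lebesgue_on \<Omega>) (\<lambda>x. g x * \<psi> x))"

definition L2 :: "pt set \<Rightarrow> (pt \<Rightarrow> real) \<Rightarrow> bool" where
  "L2 \<Omega> f \<longleftrightarrow> f \<in> borel_measurable (lebesgue_on \<Omega>)
      \<and> integrable (lebesgue_on \<Omega>) (\<lambda>x. (f x)\<^sup>2)"

definition L2norm :: "pt set \<Rightarrow> (pt \<Rightarrow> real) \<Rightarrow> real" where
  "L2norm \<Omega> f = sqrt (integral\<^sup>L (lebesgue_on \<Omega>) (\<lambda>x. (f x)\<^sup>2))"

definition H1v :: "pt set \<Rightarrow> (pt \<Rightarrow> pt) \<Rightarrow> (nat \<Rightarrow> nat \<Rightarrow> pt \<Rightarrow> real) \<Rightarrow> bool" where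
  "H1v \<Omega> U DU \<longleftrightarrow> (\<forall>i\<in>{1,2}. L2 \<Omega> (comp i U)
      \<and> (\<forall>j\<in>{1,2}. weak_partial \<Omega> (comp i U) j (DU i j) \<and> L2 \<Omega> (DU i j)))"

definition grad_norm :: "pt set \<Rightarrow> (nat \<Rightarrow> nat \<Rightarrow> pt \<Rightarrow> real) \<Rightarrow> real" where
  "grad_norm A DU = sqrt (integral\<^sup>L (lebesgue_on A)
      (\<lambda>x. \<Sum>i\<in>{1,2}. \<Sum>j\<in>{1,2}. (DU i j x)\<^sup>2))"

definition H1norm :: "pt set \<Rightarrow> (pt \<Rightarrow> pt) \<Rightarrow> (nat \<Rightarrow> nat \<Rightarrow> pt \<Rightarrow> real) \<Rightarrow> real" where
  "H1norm A U DU = sqrt (integral\<^sup>L (lebesgue_on A)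
      (\<lambda>x. (fst (U x))\<^sup>2 + (snd (U x))\<^sup>2 + (\<Sum>i\<in>{1,2}. \<Sum>j\<in>{1,2}. (DU i j x)\<^sup>2)))"

definition wdiv :: "(nat \<Rightarrow> nat \<Rightarrow> pt \<Rightarrow> real) \<Rightarrow> pt \<Rightarrow> real" where
  "wdiv DU x = DU 1 1 x + DU 2 2 x"

definition grad_inner :: "pt set \<Rightarrow> (nat \<Rightarrow> nat \<Rightarrow> pt \<Rightarrow> real) \<Rightarrow> (nat \<Rightarrow> nat \<Rightarrow> pt \<Rightarrow> real) \<Rightarrow> real" where
  "grad_inner A DU DV = integral\<^sup>L (lebesgue_on A)
      (\<lambda>x. \<Sum>i\<in>{1,2}. \<Sum>j\<in>{1,2}. DU i j x * DV i j x)"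

definition Omega_ff :: "real \<Rightarrow> real \<Rightarrow> pt set" where
  "Omega_ff L h = {x. 0 < fst x \<and> fst x < L \<and> 0 < snd x \<and> snd x < h}"

definition Sigma_if :: "real \<Rightarrow> pt set" where
  "Sigma_if L = {x. 0 < fst x \<and> fst x < L \<and> snd x = 0}"

text \<open>The solid inclusion eps (k + Y_s) in the cell eps (k + Y), Y = (0,1)^2.\<close>
definition inclusion :: "real \<Rightarrow> int \<Rightarrow> int \<Rightarrow> pt set \<Rightarrow> pt set" where
  "inclusion \<epsilon> k1 k2 Ys = (\<lambda>y. (\<epsilon> * (real_of_int k1 + fst y), \<epsilon> * (real_of_int k2 + snd y))) ` Ys"

definition Omega_pm :: "real \<Rightarrow> real \<Rightarrow> real \<Rightarrow> pt set \<Rightarrow> pt set" where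
  "Omega_pm \<epsilon> L H Ys = {x. 0 < fst x \<and> fst x < L \<and> - H < snd x \<and> snd x < 0}
      - (\<Union>k1. \<Union>k2. inclusion \<epsilon> k1 k2 Ys)"

definition Omega_eps :: "real \<Rightarrow> real \<Rightarrow> real \<Rightarrow> real \<Rightarrow> pt set \<Rightarrow> pt set" where
  "Omega_eps \<epsilon> L h H Ys = Omega_ff L h \<union> Sigma_if L \<union> Omega_pm \<epsilon> L H Ys"

text \<open>Standing geometric assumptions: Y_s is a nonempty compact set strictly
  inside the open unit cell, and the cells eps Y tile (0,L) x (-H,0).\<close>
definition geometry_ok :: "real \<Rightarrow> real \<Rightarrow> real \<Rightarrow> real \<Rightarrow> pt set \<Rightarrow> bool" where
  "geometry_ok \<epsilon> L h H Ys \<longleftrightarrow> 0 < \<epsilon> \<and> 0 < L \<and> 0 < h \<and> 0 < H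
     \<and> compact Ys \<and> Ys \<noteq> {} \<and> Ys \<subseteq> {y. 0 < fst y \<and> fst y < 1 \<and> 0 < snd y \<and> snd y < 1}
     \<and> (\<exists>n::nat. L = real n * \<epsilon>) \<and> (\<exists>m::nat. H = real m * \<epsilon>)"

text \<open>Smooth, L-periodic fields on the plane satisfying the boundary
  conditions of V_per classically.\<close>
definition smooth_bc :: "real \<Rightarrow> real \<Rightarrow> real \<Rightarrow> real \<Rightarrow> pt set \<Rightarrow> (pt \<Rightarrow> pt) \<Rightarrow> bool" where
  "smooth_bc \<epsilon> L h H Ys \<phi> \<longleftrightarrow>
      smooth (comp 1 \<phi>) \<and> smooth (comp 2 \<phi>)
    \<and> (\<forall>a b. \<phi> (a + L, b) = \<phi> (a, b))
    \<and> (\<forall>a. \<phi> (a, h) = (0, 0))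
    \<and> (\<forall>a. snd (\<phi> (a, - H)) = 0)
    \<and> (\<forall>k1 k2. - H \<le> \<epsilon> * real_of_int k2 \<and> \<epsilon> * (real_of_int k2 + 1) \<le> 0 \<longrightarrow>
         (\<forall>x\<in>frontier (inclusion \<epsilon> k1 k2 Ys). \<phi> x = (0, 0)))"

text \<open>V_per(Omega^eps): the H^1(Omega^eps)^2-closure of such smooth fields
  (DU denotes the weak gradient of U).\<close>
definition Vper :: "real \<Rightarrow> real \<Rightarrow> real \<Rightarrow> real \<Rightarrow> pt set \<Rightarrow> (pt \<Rightarrow> pt)
     \<Rightarrow> (nat \<Rightarrow> nat \<Rightarrow> pt \<Rightarrow> real) \<Rightarrow> bool" where
  "Vper \<epsilon> L h H Ys U DU \<longleftrightarrow>
      H1v (Omega_eps \<epsilon> L h H Ys) U DU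
    \<and> (\<exists>\<phi>s :: nat \<Rightarrow> pt \<Rightarrow> pt. (\<forall>n. smooth_bc \<epsilon> L h H Ys (\<phi>s n))
        \<and> (\<lambda>n. H1norm (Omega_eps \<epsilon> L h H Ys) (\<lambda>x. \<phi>s n x - U x)
               (\<lambda>i j x. pd j (comp i (\<phi>s n)) x - DU i j x)) \<longlonglongrightarrow> 0)"

end

theory Submission
  imports Defs
begin

lemma real_cs_aux:
  fixes x A B :: real
  assumes A: "A \<ge> 0" and B: "B \<ge> 0" and h: "\<And>t. t > 0 \<Longrightarrow> x \<le> (t * A + B / t) / 2"
  shows "x \<le> sqrt A * sqrt B"
proof (cases "A > 0 \<and> B > 0")
  case True
  define t where "t = sqrt B / sqrt A"
  have tp: "t > 0" using True by (simp add: t_def)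
  have sA: "sqrt A > 0" and sB: "sqrt B > 0" using True by auto
  have A2: "A = sqrt A * sqrt A" and B2: "B = sqrt B * sqrt B" using A B by simp_all
  have "t * A = sqrt A * sqrt B" unfolding t_def using sA
    by (subst A2) (simp add: field_simps)
  moreover have "B / t = sqrt A * sqrt B" unfolding t_def using sA sB
    by (subst B2) (simp add: field_simps)
  ultimately show ?thesis using h[OF tp] by simp
next
  case False
  then have "A = 0 \<or> B = 0" using A B by auto
  then show ?thesis
  proof
    assume A0: "A = 0"
    show ?thesis
    proof (rule ccontr)
      assume "\<not> ?thesis"
      then have xp: "x > 0" using A0 by simp
      define t where "t = (B + 1) / x"
      have tp: "t > 0" using xp B by (simp add: t_def)
      have "x \<le> B / t / 2" using h[OF tp] A0 by simp
      also have "B / t / 2 = B * x / (2 * (B + 1))" using xp B by (simp add: t_def field_simps)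
      also have "\<dots> < x" using xp B by (simp add: field_simps) (insert mult_nonneg_nonneg[OF B less_imp_le[OF xp]], linarith)
      finally show False by simp
    qed
  next
    assume B0: "B = 0"
    show ?thesis
    proof (rule ccontr)
      assume "\<not> ?thesis"
      then have xp: "x > 0" using B0 by simp
      define t where "t = x / (A + 1)"
      have tp: "t > 0" using xp A by (simp add: t_def)
      have "x \<le> t * A / 2" using h[OF tp] B0 by simp
      also have "t * A / 2 = x * A / (2 * (A + 1))" using xp A by (simp add: t_def field_simps)
      also have "\<dots> < x" using xp A by (simp add: field_simps) (insert mult_nonneg_nonneg[OF A less_imp_le[OF xp]], linarith)
      finally show False by simp
    qed
  qed
qed

lemma cs_integral:
  fixes f g :: "'a \<Rightarrow> real"
  assumes fm: "f \<in> borel_measurable M" and gm: "g \<in> borel_measurable M"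
    and fi: "integrable M (\<lambda>x. (f x)\<^sup>2)" and gi: "integrable M (\<lambda>x. (g x)\<^sup>2)"
  shows "\<bar>integral\<^sup>L M (\<lambda>x. f x * g x)\<bar> \<le> sqrt (integral\<^sup>L M (\<lambda>x. (f x)\<^sup>2)) * sqrt (integral\<^sup>L M (\<lambda>x. (g x)\<^sup>2))"
proof (rule real_cs_aux)
  show "0 \<le> integral\<^sup>L M (\<lambda>x. (f x)\<^sup>2)" by (intro integral_nonneg_AE AE_I2) simp
  show "0 \<le> integral\<^sup>L M (\<lambda>x. (g x)\<^sup>2)" by (intro integral_nonneg_AE AE_I2) simp
  fix t :: real assume tp: "t > 0"
  have pt: "\<bar>f x * g x\<bar> \<le> (t * (f x)\<^sup>2 + (g x)\<^sup>2 / t) / 2" for x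
  proof -
    have "0 \<le> (t * \<bar>f x\<bar> - \<bar>g x\<bar>)\<^sup>2 / t" using tp by simp
    also have "(t * \<bar>f x\<bar> - \<bar>g x\<bar>)\<^sup>2 / t = t * (f x)\<^sup>2 + (g x)\<^sup>2 / t - 2 * \<bar>f x * g x\<bar>"
      using tp by (simp add: power2_eq_square field_simps abs_mult)
    finally show ?thesis by simp
  qed
  have bi: "integrable M (\<lambda>x. (t * (f x)\<^sup>2 + (g x)\<^sup>2 / t) / 2)"
    using fi gi by simp
  have fgi: "integrable M (\<lambda>x. f x * g x)"
    by (rule Bochner_Integration.integrable_bound[OF bi]) (use fm gm pt in \<open>auto intro!: AE_I2 order_trans[OF _ abs_ge_self]\<close>)
  have "\<bar>integral\<^sup>L M (\<lambda>x. f x * g x)\<bar> \<le> integral\<^sup>L M (\<lambda>x. \<bar>f x * g x\<bar>)"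
    by (rule Bochner_Integration.integral_abs_bound)
  also have "\<dots> \<le> integral\<^sup>L M (\<lambda>x. (t * (f x)\<^sup>2 + (g x)\<^sup>2 / t) / 2)"
    by (rule Bochner_Integration.integral_mono[OF _ bi]) (use fgi pt in auto)
  also have "\<dots> = (t * integral\<^sup>L M (\<lambda>x. (f x)\<^sup>2) + integral\<^sup>L M (\<lambda>x. (g x)\<^sup>2) / t) / 2"
    using fi gi by simp
  finally show "\<bar>integral\<^sup>L M (\<lambda>x. f x * g x)\<bar> \<le> (t * integral\<^sup>L M (\<lambda>x. (f x)\<^sup>2) + integral\<^sup>L M (\<lambda>x. (g x)\<^sup>2) / t) / 2" .
qed

lemma integrable_on_subset:
  fixes f :: "pt \<Rightarrow> real"
  assumes "integrable (lebesgue_on T) f" "S \<subseteq> T" "S \<in> sets lebesgue" "T \<in> sets lebesgue"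
  shows "integrable (lebesgue_on S) f"
proof -
  have "integrable lebesgue (\<lambda>x. if x \<in> T then f x else 0)"
    using Lebesgue_Measure.integrable_restrict_UNIV[OF assms(4)] assms(1) by blast
  then have "integrable lebesgue (\<lambda>x. (if x \<in> T then f x else 0) * indicator S x)"
    using assms by (intro integrable_real_mult_indicator) auto
  moreover have "(\<lambda>x. (if x \<in> T then f x else 0) * indicator S x) = (\<lambda>x. if x \<in> S then f x else 0)"
    using assms by (auto simp: indicator_def fun_eq_iff)
  ultimately show ?thesis using Lebesgue_Measure.integrable_restrict_UNIV[OF assms(3), of f] by simp
qed

lemma integral_split3:
  fixes f :: "pt \<Rightarrow> real"
  assumes fi: "integrable (lebesgue_on (A \<union> N \<union> B)) f"
    and A: "A \<in> sets lebesgue" and B: "B \<in> sets lebesgue" and N: "N \<in> null_sets lebesgue"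
    and d1: "A \<inter> N = {}" and d2: "A \<inter> B = {}" and d3: "N \<inter> B = {}"
  shows "integral\<^sup>L (lebesgue_on (A \<union> N \<union> B)) f
       = integral\<^sup>L (lebesgue_on A) f + integral\<^sup>L (lebesgue_on B) f"
proof -
  have Ns: "N \<in> sets lebesgue" using N by auto
  have O: "A \<union> N \<union> B \<in> sets lebesgue" using A B Ns by auto
  have iA: "integrable (lebesgue_on A) f" by (rule integrable_on_subset[OF fi]) (use A O in auto)
  have iB: "integrable (lebesgue_on B) f" by (rule integrable_on_subset[OF fi]) (use B O in auto)
  have iN: "integrable (lebesgue_on N) f" by (rule integrable_on_subset[OF fi]) (use Ns O in auto)
  have eq: "(\<lambda>x. if x \<in> A \<union> N \<union> B then f x else 0)
     = (\<lambda>x. (if x \<in> A then f x else 0) + (if x \<in> N then f x else 0) + (if x \<in> B then f x else 0))"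
    using d1 d2 d3 by (auto simp: fun_eq_iff)
  have jA: "integrable lebesgue (\<lambda>x. if x \<in> A then f x else 0)"
    using Lebesgue_Measure.integrable_restrict_UNIV[OF A] iA by blast
  have jB: "integrable lebesgue (\<lambda>x. if x \<in> B then f x else 0)"
    using Lebesgue_Measure.integrable_restrict_UNIV[OF B] iB by blast
  have jN: "integrable lebesgue (\<lambda>x. if x \<in> N then f x else 0)"
    using Lebesgue_Measure.integrable_restrict_UNIV[OF Ns] iN by blast
  have "integral\<^sup>L (lebesgue_on (A \<union> N \<union> B)) f = integral\<^sup>L lebesgue (\<lambda>x. if x \<in> A \<union> N \<union> B then f x else 0)"
    by (rule Lebesgue_Measure.integral_restrict_UNIV[OF O, symmetric])
  also have "\<dots> = integral\<^sup>L lebesgue (\<lambda>x. (if x \<in> A then f x else 0) + (if x \<in> N then f x else 0) + (if x \<in> B then f x else 0))"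
    by (simp only: eq)
  also have "\<dots> = integral\<^sup>L lebesgue (\<lambda>x. (if x \<in> A then f x else 0) + (if x \<in> N then f x else 0)) + integral\<^sup>L lebesgue (\<lambda>x. if x \<in> B then f x else 0)"
    by (rule Bochner_Integration.integral_add[OF Bochner_Integration.integrable_add[OF jA jN] jB])
  also have "integral\<^sup>L lebesgue (\<lambda>x. (if x \<in> A then f x else 0) + (if x \<in> N then f x else 0)) = integral\<^sup>L lebesgue (\<lambda>x. if x \<in> A then f x else 0) + integral\<^sup>L lebesgue (\<lambda>x. if x \<in> N then f x else 0)"
    by (rule Bochner_Integration.integral_add[OF jA jN])
  also have "integral\<^sup>L lebesgue (\<lambda>x. if x \<in> A then f x else 0) = integral\<^sup>L (lebesgue_on A) f"
    by (rule Lebesgue_Measure.integral_restrict_UNIV[OF A])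
  also have "integral\<^sup>L lebesgue (\<lambda>x. if x \<in> B then f x else 0) = integral\<^sup>L (lebesgue_on B) f"
    by (rule Lebesgue_Measure.integral_restrict_UNIV[OF B])
  also have "integral\<^sup>L lebesgue (\<lambda>x. if x \<in> N then f x else 0) = integral\<^sup>L (lebesgue_on N) f"
    by (rule Lebesgue_Measure.integral_restrict_UNIV[OF Ns])
  also have "integral\<^sup>L (lebesgue_on N) f = 0" by (rule integral_eq_zero_null_sets[OF N])
  finally show ?thesis by (simp only: add_0_right)
qed

lemma sets_ff: "Omega_ff L h \<in> sets lebesgue"
proof -
  have "open (Omega_ff L h)" unfolding Omega_ff_def
    by (intro open_Collect_conj open_Collect_less continuous_intros)
  then show ?thesis by (intro sets_completionI_sets) (simp add: borel_open)
qed

lemma null_Sigma: "Sigma_if L \<in> null_sets lebesgue"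
proof -
  have "negligible {x::pt. x \<bullet> (0,1) = 0}"
    by (rule negligible_standard_hyperplane) (simp add: Basis_prod_def)
  then have "negligible (Sigma_if L)"
    by (rule negligible_subset) (auto simp: Sigma_if_def)
  then show ?thesis by (simp add: negligible_iff_null_sets)
qed

lemma sets_pm:
  assumes "compact Ys"
  shows "Omega_pm \<epsilon> L H Ys \<in> sets lebesgue"
proof -
  have cl: "closed (inclusion \<epsilon> k1 k2 Ys)" for k1 k2
    unfolding inclusion_def
    by (intro compact_imp_closed compact_continuous_image assms continuous_intros)
  have "(\<Union>k1. \<Union>k2. inclusion \<epsilon> k1 k2 Ys) \<in> sets borel"
    using cl by (intro sets.countable_UN' ) auto
  moreover have "{x::pt. 0 < fst x \<and> fst x < L \<and> - H < snd x \<and> snd x < 0} \<in> sets borel"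
    by (intro borel_open open_Collect_conj open_Collect_less continuous_intros)
  ultimately have "Omega_pm \<epsilon> L H Ys \<in> sets borel" unfolding Omega_pm_def
    by (intro sets.Diff)
  then show ?thesis by (intro sets_completionI_sets) simp
qed

lemma sq_sum_integrable:
  fixes a b :: "pt \<Rightarrow> real"
  assumes "a \<in> borel_measurable M" "b \<in> borel_measurable M"
    "integrable M (\<lambda>x. (a x)\<^sup>2)" "integrable M (\<lambda>x. (b x)\<^sup>2)"
  shows "integrable M (\<lambda>x. (a x + b x)\<^sup>2)"
proof (rule Bochner_Integration.integrable_bound)
  show "integrable M (\<lambda>x. 2 * (a x)\<^sup>2 + 2 * (b x)\<^sup>2)" using assms by simp
  show "(\<lambda>x. (a x + b x)\<^sup>2) \<in> borel_measurable M" using assms by measurable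
  have "(a x + b x)\<^sup>2 \<le> 2 * (a x)\<^sup>2 + 2 * (b x)\<^sup>2" for x
  proof -
    have "0 \<le> (a x - b x)\<^sup>2" by simp
    then show ?thesis by (simp add: power2_eq_square algebra_simps)
  qed
  then show "AE x in M. norm ((a x + b x)\<^sup>2) \<le> norm (2 * (a x)\<^sup>2 + 2 * (b x)\<^sup>2)"
    by (intro AE_I2) simp
qed

theorem corollary3p5:
  fixes C1 C2 :: real
  shows "\<exists>C::real. \<forall>\<epsilon> L h H Ys U DU P.
     geometry_ok \<epsilon> L h H Ys \<and> \<epsilon> \<le> 1
   \<and> Vper \<epsilon> L h H Ys U DU
   \<and> L2 (Omega_eps \<epsilon> L h H Ys) P
   \<and> L2norm (Omega_eps \<epsilon> L h H Ys) (wdiv DU) \<le> C1 * \<epsilon> powr (5/2)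
   \<and> (\<forall>\<phi> D\<phi>. Vper \<epsilon> L h H Ys \<phi> D\<phi> \<longrightarrow>
        \<bar>grad_inner (Omega_eps \<epsilon> L h H Ys) DU D\<phi>
          - integral\<^sup>L (lebesgue_on (Omega_eps \<epsilon> L h H Ys)) (\<lambda>x. P x * wdiv D\<phi> x)\<bar>
        \<le> C2 * \<epsilon> powr (3/2) * (grad_norm (Omega_eps \<epsilon> L h H Ys) D\<phi> + H1norm (Omega_ff L h) \<phi> D\<phi>))
   \<longrightarrow> (grad_norm (Omega_eps \<epsilon> L h H Ys) DU)\<^sup>2
        \<le> C * \<epsilon> powr (5/2) * L2norm (Omega_eps \<epsilon> L h H Ys) P
          + C * \<epsilon> powr (3/2) * (grad_norm (Omega_pm \<epsilon> L H Ys) DU + H1norm (Omega_ff L h) U DU)"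
proof (intro exI[of _ "\<bar>C1\<bar> + 2 * \<bar>C2\<bar>"] allI impI)
  fix \<epsilon> L h H :: real and Ys :: "pt set" and U :: "pt \<Rightarrow> pt" and DU :: "nat \<Rightarrow> nat \<Rightarrow> pt \<Rightarrow> real"
    and P :: "pt \<Rightarrow> real"
  let ?O = "Omega_eps \<epsilon> L h H Ys"
  let ?F = "Omega_ff L h"
  let ?S = "Sigma_if L"
  let ?M = "Omega_pm \<epsilon> L H Ys"
  define C where "C = \<bar>C1\<bar> + 2 * \<bar>C2\<bar>"
  assume A: "geometry_ok \<epsilon> L h H Ys \<and> \<epsilon> \<le> 1
   \<and> Vper \<epsilon> L h H Ys U DU
   \<and> L2 ?O P
   \<and> L2norm ?O (wdiv DU) \<le> C1 * \<epsilon> powr (5/2)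
   \<and> (\<forall>\<phi> D\<phi>. Vper \<epsilon> L h H Ys \<phi> D\<phi> \<longrightarrow>
        \<bar>grad_inner ?O DU D\<phi> - integral\<^sup>L (lebesgue_on ?O) (\<lambda>x. P x * wdiv D\<phi> x)\<bar>
        \<le> C2 * \<epsilon> powr (3/2) * (grad_norm ?O D\<phi> + H1norm ?F \<phi> D\<phi>))"
  have geo: "geometry_ok \<epsilon> L h H Ys" using A by blast
  then have ep: "\<epsilon> > 0" and cYs: "compact Ys" by (auto simp: geometry_ok_def)
  have V: "Vper \<epsilon> L h H Ys U DU" using A by blast
  have LP: "L2 ?O P" using A by blast
  have Ldiv: "L2norm ?O (wdiv DU) \<le> C1 * \<epsilon> powr (5/2)" using A by blast
  have hyp: "\<bar>grad_inner ?O DU DU - integral\<^sup>L (lebesgue_on ?O) (\<lambda>x. P x * wdiv DU x)\<bar>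
        \<le> C2 * \<epsilon> powr (3/2) * (grad_norm ?O DU + H1norm ?F U DU)"
    using A V by blast
  have H1: "H1v ?O U DU" using V by (simp add: Vper_def)
  have DUL2: "L2 ?O (DU i j)" if "i \<in> {1,2}" "j \<in> {1,2}" for i j
    using H1 that unfolding H1v_def by blast
  have UL2: "L2 ?O (comp i U)" if "i \<in> {1,2}" for i
    using H1 that unfolding H1v_def by blast
  have m: "DU i j \<in> borel_measurable (lebesgue_on ?O)" "integrable (lebesgue_on ?O) (\<lambda>x. (DU i j x)\<^sup>2)"
    if "i \<in> {1,2}" "j \<in> {1,2}" for i j
    using DUL2[OF that] unfolding L2_def by auto
  have u1: "integrable (lebesgue_on ?O) (\<lambda>x. (fst (U x))\<^sup>2)"
    using UL2[of 1] unfolding L2_def comp_def by simp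
  have u2: "integrable (lebesgue_on ?O) (\<lambda>x. (snd (U x))\<^sup>2)"
    using UL2[of 2] unfolding L2_def comp_def by simp
  define G where "G = (\<lambda>x. \<Sum>i\<in>{1::nat,2}. \<Sum>j\<in>{1::nat,2}. (DU i j x)\<^sup>2)"
  have Gexp: "G = (\<lambda>x. (DU 1 1 x)\<^sup>2 + (DU 1 2 x)\<^sup>2 + ((DU 2 1 x)\<^sup>2 + (DU 2 2 x)\<^sup>2))"
    unfolding G_def by (simp add: fun_eq_iff)
  have Gi: "integrable (lebesgue_on ?O) G"
    unfolding Gexp using m by (intro Bochner_Integration.integrable_add) auto
  have G0: "0 \<le> G x" for x unfolding G_def by (intro sum_nonneg) auto
  have gi: "grad_inner ?O DU DU = integral\<^sup>L (lebesgue_on ?O) G"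
    unfolding grad_inner_def G_def by (simp add: power2_eq_square)
  have IG0: "0 \<le> integral\<^sup>L (lebesgue_on ?O) G" by (intro integral_nonneg_AE AE_I2 G0)
  have gn: "grad_norm ?O DU = sqrt (integral\<^sup>L (lebesgue_on ?O) G)"
    unfolding grad_norm_def G_def ..
  have gn2: "(grad_norm ?O DU)\<^sup>2 = integral\<^sup>L (lebesgue_on ?O) G"
    using gn IG0 by simp
  have divm: "wdiv DU \<in> borel_measurable (lebesgue_on ?O)"
    unfolding wdiv_def using m by (intro borel_measurable_add) auto
  have divi: "integrable (lebesgue_on ?O) (\<lambda>x. (wdiv DU x)\<^sup>2)"
    unfolding wdiv_def by (rule sq_sum_integrable) (use m in auto)
  have Pm: "P \<in> borel_measurable (lebesgue_on ?O)" and Pi: "integrable (lebesgue_on ?O) (\<lambda>x. (P x)\<^sup>2)"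
    using LP unfolding L2_def by auto
  have cs: "\<bar>integral\<^sup>L (lebesgue_on ?O) (\<lambda>x. P x * wdiv DU x)\<bar> \<le> L2norm ?O P * L2norm ?O (wdiv DU)"
    unfolding L2norm_def by (rule cs_integral[OF Pm divm Pi divi])
  have LP0: "0 \<le> L2norm ?O P" unfolding L2norm_def by simp
  have e5: "0 < \<epsilon> powr (5/2)" and e3: "0 < \<epsilon> powr (3/2)" using ep by auto
  have cs2: "\<bar>integral\<^sup>L (lebesgue_on ?O) (\<lambda>x. P x * wdiv DU x)\<bar> \<le> C * \<epsilon> powr (5/2) * L2norm ?O P"
  proof -
    have "L2norm ?O P * L2norm ?O (wdiv DU) \<le> L2norm ?O P * (C1 * \<epsilon> powr (5/2))"
      by (rule mult_left_mono[OF Ldiv LP0])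
    also have "\<dots> \<le> L2norm ?O P * (C * \<epsilon> powr (5/2))"
      by (rule mult_left_mono[OF _ LP0]) (use e5 in \<open>auto simp: C_def intro!: mult_right_mono\<close>)
    finally show ?thesis using cs by (simp add: mult_ac)
  qed
  have sF: "?F \<in> sets lebesgue" by (rule sets_ff)
  have sM: "?M \<in> sets lebesgue" by (rule sets_pm[OF cYs])
  have nS: "?S \<in> null_sets lebesgue" by (rule null_Sigma)
  have sS: "?S \<in> sets lebesgue" using nS by (rule null_setsD2)
  have Oeq: "?O = ?F \<union> ?S \<union> ?M" by (simp add: Omega_eps_def)
  have sO: "?O \<in> sets lebesgue" unfolding Oeq by (intro sets.Un sF sS sM)
  have d1: "?F \<inter> ?S = {}" by (auto simp: Omega_ff_def Sigma_if_def)
  have d2: "?F \<inter> ?M = {}" by (auto simp: Omega_ff_def Omega_pm_def)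
  have d3: "?S \<inter> ?M = {}" by (auto simp: Sigma_if_def Omega_pm_def)
  have split: "integral\<^sup>L (lebesgue_on ?O) G = integral\<^sup>L (lebesgue_on ?F) G + integral\<^sup>L (lebesgue_on ?M) G"
    using integral_split3[of ?F ?S ?M G] Gi sF sM nS d1 d2 d3 Oeq by simp
  have FO: "?F \<subseteq> ?O" and MO: "?M \<subseteq> ?O" unfolding Oeq by auto
  have GiF: "integrable (lebesgue_on ?F) G" by (rule integrable_on_subset[OF Gi FO sF sO])
  have HiO: "integrable (lebesgue_on ?O) (\<lambda>x. (fst (U x))\<^sup>2 + (snd (U x))\<^sup>2 + G x)"
    using u1 u2 Gi by (intro Bochner_Integration.integrable_add)
  have HiF: "integrable (lebesgue_on ?F) (\<lambda>x. (fst (U x))\<^sup>2 + (snd (U x))\<^sup>2 + G x)"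
    by (rule integrable_on_subset[OF HiO FO sF sO])
  have IGF: "integral\<^sup>L (lebesgue_on ?F) G \<le> integral\<^sup>L (lebesgue_on ?F) (\<lambda>x. (fst (U x))\<^sup>2 + (snd (U x))\<^sup>2 + G x)"
    by (rule Bochner_Integration.integral_mono[OF GiF HiF]) simp
  have IGF0: "0 \<le> integral\<^sup>L (lebesgue_on ?F) G" by (intro integral_nonneg_AE AE_I2 G0)
  have IGM0: "0 \<le> integral\<^sup>L (lebesgue_on ?M) G" by (intro integral_nonneg_AE AE_I2 G0)
  have Hn: "H1norm ?F U DU = sqrt (integral\<^sup>L (lebesgue_on ?F) (\<lambda>x. (fst (U x))\<^sup>2 + (snd (U x))\<^sup>2 + G x))"
    unfolding H1norm_def G_def ..
  have gM: "grad_norm ?M DU = sqrt (integral\<^sup>L (lebesgue_on ?M) G)"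
    unfolding grad_norm_def G_def ..
  have gO_le: "grad_norm ?O DU \<le> H1norm ?F U DU + grad_norm ?M DU"
  proof -
    have "grad_norm ?O DU = sqrt (integral\<^sup>L (lebesgue_on ?F) G + integral\<^sup>L (lebesgue_on ?M) G)"
      using gn split by simp
    also have "\<dots> \<le> sqrt (integral\<^sup>L (lebesgue_on ?F) G) + sqrt (integral\<^sup>L (lebesgue_on ?M) G)"
      by (rule sqrt_add_le_add_sqrt[OF IGF0 IGM0])
    also have "\<dots> \<le> H1norm ?F U DU + grad_norm ?M DU"
      unfolding Hn gM using IGF by simp
    finally show ?thesis .
  qed
  have Hn0: "0 \<le> H1norm ?F U DU" unfolding H1norm_def by simp
  have gM0: "0 \<le> grad_norm ?M DU" unfolding grad_norm_def by simp
  have gO0: "0 \<le> grad_norm ?O DU" unfolding grad_norm_def by simp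
  have last: "C2 * \<epsilon> powr (3/2) * (grad_norm ?O DU + H1norm ?F U DU)
      \<le> C * \<epsilon> powr (3/2) * (grad_norm ?M DU + H1norm ?F U DU)"
  proof -
    let ?Y = "grad_norm ?O DU + H1norm ?F U DU"
    let ?X = "grad_norm ?M DU + H1norm ?F U DU"
    have Y0: "0 \<le> \<epsilon> powr (3/2) * ?Y" using e3 gO0 Hn0 by simp
    have "C2 * \<epsilon> powr (3/2) * ?Y = C2 * (\<epsilon> powr (3/2) * ?Y)" by simp
    also have "\<dots> \<le> \<bar>C2\<bar> * (\<epsilon> powr (3/2) * ?Y)" by (rule mult_right_mono[OF _ Y0]) simp
    also have "\<dots> \<le> \<bar>C2\<bar> * (\<epsilon> powr (3/2) * (2 * ?X))"
      using gO_le e3 gM0 Hn0 by (intro mult_left_mono) auto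
    also have "\<dots> = (2 * \<bar>C2\<bar>) * (\<epsilon> powr (3/2) * ?X)" by simp
    also have "\<dots> \<le> C * (\<epsilon> powr (3/2) * ?X)"
      using e3 gM0 Hn0 by (intro mult_right_mono) (auto simp: C_def)
    finally show ?thesis by (simp add: mult_ac)
  qed
  have "(grad_norm ?O DU)\<^sup>2 \<le> \<bar>integral\<^sup>L (lebesgue_on ?O) (\<lambda>x. P x * wdiv DU x)\<bar>
        + C2 * \<epsilon> powr (3/2) * (grad_norm ?O DU + H1norm ?F U DU)"
    using hyp gi gn2 by linarith
  then show "(grad_norm ?O DU)\<^sup>2
        \<le> (\<bar>C1\<bar> + 2 * \<bar>C2\<bar>) * \<epsilon> powr (5/2) * L2norm ?O P
          + (\<bar>C1\<bar> + 2 * \<bar>C2\<bar>) * \<epsilon> powr (3/2) * (grad_norm ?M DU + H1norm ?F U DU)"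
    using cs2 last unfolding C_def by linarith
qed

end
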